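(* Let $a$ be a positive integer with $\sigma(a)\neq 2a$, and let $b,c$ be coprime integers with $c>0$ and $\dfrac{b}{c}=\dfrac{a}{2a-\sigma(a)}$. Let $\alpha,\beta,x,y$ be positive integers and put $$p=\alpha x-1,\quad q=\beta y-1,\quad r=\beta x-1,\quad s=\alpha y-1.$$ Suppose $p,q,r,s$ are primes with $p\neq q$, $r\neq s$, none of which divides $a$. If $$\bigl(c\alpha\beta x-b(\alpha+\beta)\bigr)\bigl(c\alpha\beta y-b(\alpha+\beta)\bigr)=b^2(\alpha+\beta)^2-2bc\alpha\beta,$$ then $apq$ and $ars$ are amicable numbers.
   Context: For a positive integer $N$, $\sigma(N)$ denotes the sum of all positive divisors of $N$. Positive integers $M,N$ are amicable if $\sigma(M)-M=N$ and $\sigma(N)-N=M$. *)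

theory Defs
  imports Complex_Main "HOL-Computational_Algebra.Primes"
begin

definition sigma :: "nat \<Rightarrow> nat" where
  "sigma N = (\<Sum>d\<in>{d. d dvd N}. d)"

definition amicable :: "nat \<Rightarrow> nat \<Rightarrow> bool" where
  "amicable M N \<longleftrightarrow> M > 0 \<and> N > 0 \<and> int (sigma M) - int M = int N \<and> int (sigma N) - int N = int M"

end

theory Submission
  imports Defs
begin

lemma sigma_mult_prime:
  fixes m p :: nat
  assumes "m > 0" "prime p" "\<not> p dvd m"
  shows "sigma (m * p) = sigma m * (p + 1)"
proof -
  have p0: "p > 0" using assms(2) prime_gt_0_nat by blast
  have fin: "finite {d. d dvd m}" using assms(1) by simp
  have eq: "{d. d dvd m * p} = {d. d dvd m} \<union> ((*) p ` {d. d dvd m})"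
  proof (intro equalityI subsetI)
    fix d assume "d \<in> {d. d dvd m * p}"
    hence d: "d dvd m * p" by simp
    show "d \<in> {d. d dvd m} \<union> ((*) p ` {d. d dvd m})"
    proof (cases "p dvd d")
      case True
      then obtain e where e: "d = p * e" by blast
      with d have "p * e dvd p * m" by (simp add: mult.commute)
      hence "e dvd m" using p0 by simp
      thus ?thesis using e by blast
    next
      case False
      hence "coprime d p" using assms(2)
        by (metis coprime_commute prime_imp_coprime)
      hence "d dvd m" using d coprime_dvd_mult_left_iff by blast
      thus ?thesis by simp
    qed
  next
    fix d assume "d \<in> {d. d dvd m} \<union> ((*) p ` {d. d dvd m})"
    thus "d \<in> {d. d dvd m * p}" by (auto simp: mult.commute)
  qed
  have disj: "{d. d dvd m} \<inter> ((*) p ` {d. d dvd m}) = {}"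
  proof (rule ccontr)
    assume "{d. d dvd m} \<inter> ((*) p ` {d. d dvd m}) \<noteq> {}"
    then obtain e where "p * e dvd m" by blast
    hence "p dvd m" using dvd_mult_left by blast
    thus False using assms(3) by simp
  qed
  have inj: "inj_on ((*) p) {d. d dvd m}" using p0 by (auto simp: inj_on_def)
  have "sigma (m * p) = (\<Sum>d\<in>{d. d dvd m}. d) + (\<Sum>d\<in>(*) p ` {d. d dvd m}. d)"
    unfolding sigma_def eq by (rule sum.union_disjoint) (use fin disj in auto)
  also have "(\<Sum>d\<in>(*) p ` {d. d dvd m}. d) = (\<Sum>d\<in>{d. d dvd m}. p * d)"
    using sum.reindex[OF inj] by simp
  also have "\<dots> = p * sigma m" unfolding sigma_def by (simp add: sum_distrib_left)
  finally show ?thesis unfolding sigma_def by (simp add: algebra_simps)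
qed

lemma sigma_two:
  fixes m p q :: nat
  assumes "m > 0" "prime p" "prime q" "p \<noteq> q" "\<not> p dvd m" "\<not> q dvd m"
  shows "sigma (m * p * q) = sigma m * (p + 1) * (q + 1)"
proof -
  have "\<not> q dvd m * p"
    using assms by (metis prime_dvd_mult_iff primes_dvd_imp_eq)
  moreover have "m * p > 0" using assms prime_gt_0_nat by simp
  ultimately have "sigma (m * p * q) = sigma (m * p) * (q + 1)"
    using sigma_mult_prime assms by blast
  thus ?thesis using sigma_mult_prime assms by simp
qed

theorem mainTheorem8:
  fixes a \<alpha> \<beta> x y :: nat and b c :: int
  assumes "a > 0" and "sigma a \<noteq> 2 * a"
    and "coprime b c" and "c > 0"
    and "(of_int b / of_int c :: rat) = of_nat a / (2 * of_nat a - of_nat (sigma a))"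
    and "\<alpha> > 0" "\<beta> > 0" "x > 0" "y > 0"
    and "prime (\<alpha> * x - 1)" "prime (\<beta> * y - 1)" "prime (\<beta> * x - 1)" "prime (\<alpha> * y - 1)"
    and "\<alpha> * x - 1 \<noteq> \<beta> * y - 1" "\<beta> * x - 1 \<noteq> \<alpha> * y - 1"
    and "\<not> (\<alpha> * x - 1) dvd a" "\<not> (\<beta> * y - 1) dvd a"
    and "\<not> (\<beta> * x - 1) dvd a" "\<not> (\<alpha> * y - 1) dvd a"
    and "(c * \<alpha> * \<beta> * x - b * (\<alpha> + \<beta>)) * (c * \<alpha> * \<beta> * y - b * (\<alpha> + \<beta>))
         = b^2 * (\<alpha> + \<beta>)^2 - 2 * b * c * \<alpha> * \<beta>"
  shows "amicable (a * (\<alpha> * x - 1) * (\<beta> * y - 1)) (a * (\<beta> * x - 1) * (\<alpha> * y - 1))"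
proof -
  define S where "S = sigma a"
  have ax: "\<alpha> * x \<ge> 1" "\<beta> * y \<ge> 1" "\<beta> * x \<ge> 1" "\<alpha> * y \<ge> 1"
    using assms(6-9) by (simp_all add: Suc_le_eq)
  have s1: "sigma (a * (\<alpha> * x - 1) * (\<beta> * y - 1)) = S * (\<alpha> * x) * (\<beta> * y)"
    proof -
    have "\<alpha> * x - 1 + 1 = \<alpha> * x" "\<beta> * y - 1 + 1 = \<beta> * y" using ax by simp_all
    thus ?thesis using sigma_two[OF assms(1) assms(10,11,14,16,17)] unfolding S_def by metis
  qed
  have s2: "sigma (a * (\<beta> * x - 1) * (\<alpha> * y - 1)) = S * (\<beta> * x) * (\<alpha> * y)"
    proof -
    have "\<beta> * x - 1 + 1 = \<beta> * x" "\<alpha> * y - 1 + 1 = \<alpha> * y" using ax by simp_all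
    thus ?thesis using sigma_two[OF assms(1) assms(12,13,15,18,19)] unfolding S_def by metis
  qed
  have D0: "2 * int a - int S \<noteq> 0" using assms(2) unfolding S_def by linarith
  have D0r: "(2 * of_nat a - of_nat S :: rat) \<noteq> 0"
  proof
    assume "(2 * of_nat a - of_nat S :: rat) = 0"
    hence "(of_int (2 * int a - int S) :: rat) = 0" by simp
    with D0 show False by (simp only: of_int_eq_0_iff)
  qed
  have "(of_int b :: rat) * (2 * of_nat a - of_nat S) = of_int c * of_nat a"
    using assms(5) D0r assms(4) unfolding S_def[symmetric]
    by (simp add: field_simps)
  hence "(of_int (b * (2 * int a - int S)) :: rat) = of_int (c * int a)" by simp
  hence bc: "b * (2 * int a - int S) = c * int a" by (simp only: of_int_eq_iff)
  define T where "T = int \<alpha> + int \<beta>"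
  have "c * \<alpha> * \<beta> * (c * \<alpha> * \<beta> * x * y - b * T * (x + y) + 2 * b) = 0"
    using assms(20) unfolding T_def by (simp add: algebra_simps power2_eq_square)
  moreover have "c * \<alpha> * \<beta> \<noteq> 0" using assms(4,6,7) by simp
  ultimately have "c * \<alpha> * \<beta> * x * y - b * T * (x + y) + 2 * b = 0"
    by (metis mult_eq_0_iff)
  hence key: "c * \<alpha> * \<beta> * x * y = b * (T * (x + y) - 2)"
    by (simp add: algebra_simps)
  have "c * ((2 * int a - int S) * \<alpha> * \<beta> * x * y) = c * (int a * (T * (x + y) - 2))"
  proof -
    have "c * ((2 * int a - int S) * \<alpha> * \<beta> * x * y) = (2 * int a - int S) * (c * \<alpha> * \<beta> * x * y)"
      by (simp add: algebra_simps)
    also have "\<dots> = (b * (2 * int a - int S)) * (T * (x + y) - 2)" by (subst key) (simp add: algebra_simps)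
    also have "\<dots> = c * (int a * (T * (x + y) - 2))" using bc by (simp add: algebra_simps)
    finally show ?thesis .
  qed
  hence k2: "(2 * int a - int S) * \<alpha> * \<beta> * x * y = int a * (T * (x + y) - 2)"
    using assms(4) by simp
  have e: "int S * (\<alpha> * x) * (\<beta> * y) =
     int a * ((int (\<alpha> * x) - 1) * (int (\<beta> * y) - 1) + (int (\<beta> * x) - 1) * (int (\<alpha> * y) - 1))"
    using k2 unfolding T_def by (simp add: algebra_simps)
  have pos: "\<alpha> * x - 1 > 0" "\<beta> * y - 1 > 0" "\<beta> * x - 1 > 0" "\<alpha> * y - 1 > 0"
    using assms(10-13) prime_gt_0_nat by blast+
  have c1: "int (a * (\<alpha> * x - 1) * (\<beta> * y - 1)) = int a * (int (\<alpha> * x) - 1) * (int (\<beta> * y) - 1)"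
    using ax by (simp add: of_nat_diff)
  have c2: "int (a * (\<beta> * x - 1) * (\<alpha> * y - 1)) = int a * (int (\<beta> * x) - 1) * (int (\<alpha> * y) - 1)"
    using ax by (simp add: of_nat_diff)
  have c3: "int (S * (\<alpha> * x) * (\<beta> * y)) = int S * (\<alpha> * x) * (\<beta> * y)" by simp
  have c4: "int (S * (\<beta> * x) * (\<alpha> * y)) = int S * (\<alpha> * x) * (\<beta> * y)" by simp
  have M: "a * (\<alpha> * x - 1) * (\<beta> * y - 1) > 0" "a * (\<beta> * x - 1) * (\<alpha> * y - 1) > 0"
    using assms(1) pos by simp_all
  show ?thesis unfolding amicable_def s1 s2 c1 c2 c3 c4
    using M e by (simp add: algebra_simps)
qed

end
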